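(* Consider the model in the context with $\gamma<0$, and let $s,t\in\mathcal{T}$ with $t\geq s+2$ and $t+1\le T$. Under Assumption A, for both $\tau=s$ and $\tau=t$, writing $C_d=\{w^T,y_{s-1}=y_{t-1},y_{s+1}=y_{t+1}=d,\alpha\}$ for $d\in\{0,1\}$: \[ P(E_{\tau+1,1}\mid C_1)=P(y_{\tau}=1\mid C_1)+\frac{F_{\epsilon|\alpha}(w_{\tau+1}+\gamma+\alpha)}{F_{\epsilon|\alpha}(w_{\tau+1}+\alpha)}\big[1-P(y_{\tau}=1\mid C_1)\big], \] \[ P(E_{\tau+1,2}\mid C_0)=\frac{F_{\epsilon|\alpha}(w_{\tau+1}+\alpha)-F_{\epsilon|\alpha}(w_{\tau+1}+\gamma+\alpha)}{1-F_{\epsilon|\alpha}(w_{\tau+1}+\gamma+\alpha)}P(y_{\tau}=1\mid C_0), \] \[ P(E_{\tau+1,3}\mid C_0)=\frac{1-F_{\epsilon|\alpha}(w_{\tau+1}+\alpha)}{1-F_{\epsilon|\alpha}(w_{\tau+1}+\gamma+\alpha)}P(y_{\tau}=1\mid C_0)+1-P(y_{\tau}=1\mid C_0). \]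
   Context: Model: $y_0\in\{0,1\}$ observed and, for $t\in\mathcal{T}=\{1,\dots,T\}$, $y_{t}=1[x_{t}^{\prime}\beta+\gamma y_{t-1}+\alpha-\epsilon_{t}>0]$, $x_t\in\mathbb{R}^K$ observed, $\alpha$ an unobserved individual effect, $\epsilon_t$ unobserved errors. $w_t=x_t'\beta$, $w^T=(w_1,\dots,w_T)$. For each $t$, $E_{t,1}=\{\epsilon_t<w_t+\gamma+\alpha\}$, $E_{t,2}=\{w_t+\gamma+\alpha\le\epsilon_t<w_t+\alpha\}$, $E_{t,3}=\{\epsilon_t\ge w_t+\alpha\}$. Assumption A: for all $\alpha$ and $s,t\in\mathcal{T}$: (a)(i) $\epsilon^T\perp(x^T,y_0)\mid\alpha$, (ii) $\epsilon_s\perp\epsilon_t\mid\alpha$ ($s\ne t$), (iii) $\epsilon_s\overset{d}{=}\epsilon_t\mid\alpha$, with common CDF $F_{\epsilon|\alpha}$; (b) $F_{\epsilon|\alpha}$ absolutely continuous with support $\mathbb{R}$; (c) $x_{ts,1}$ has a.e. positive density on $\mathbb{R}$ given the other components of $x_t-x_s$ and $\alpha$, and $\beta_1\ne0$; (d) the support of $x_t-x_s$ given $\alpha$ is not in a proper linear subspace of $\mathbb{R}^K$; (e) $\|\beta\|_2=1$, $\gamma$ in the interior of a compact $\mathcal{R}$. *)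

theory Defs
  imports "HOL-Probability.Probability"
begin

text \<open>Outcome path of the dynamic binary choice model, conditionally on (w^T, alpha):
  y_0 given, y_n = 1[w_n + gamma y_{n-1} + alpha - eps_n > 0]. True encodes 1.\<close>
fun yseq :: "(nat \<Rightarrow> real) \<Rightarrow> real \<Rightarrow> real \<Rightarrow> bool \<Rightarrow> (nat \<Rightarrow> real) \<Rightarrow> nat \<Rightarrow> bool" where
  "yseq w g a y0 e 0 = y0"
| "yseq w g a y0 e (Suc n) =
     (w (Suc n) + g * (if yseq w g a y0 e n then 1 else 0) + a - e (Suc n) > 0)"

definition ypath :: "(nat \<Rightarrow> real) \<Rightarrow> real \<Rightarrow> real \<Rightarrow> ('a \<Rightarrow> bool) \<Rightarrow> (nat \<Rightarrow> 'a \<Rightarrow> real)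
    \<Rightarrow> 'a \<Rightarrow> nat \<Rightarrow> bool" where
  "ypath w g a y0 eps \<omega> n = yseq w g a (y0 \<omega>) (\<lambda>k. eps k \<omega>) n"

definition Cev :: "(nat \<Rightarrow> real) \<Rightarrow> real \<Rightarrow> real \<Rightarrow> ('a \<Rightarrow> bool) \<Rightarrow> (nat \<Rightarrow> 'a \<Rightarrow> real)
    \<Rightarrow> nat \<Rightarrow> nat \<Rightarrow> bool \<Rightarrow> 'a \<Rightarrow> bool" where
  "Cev w g a y0 eps s t d \<omega> =
     (ypath w g a y0 eps \<omega> (s - 1) = ypath w g a y0 eps \<omega> (t - 1)
      \<and> ypath w g a y0 eps \<omega> (s + 1) = d \<and> ypath w g a y0 eps \<omega> (t + 1) = d)"

end

theory Submission
  imports Defs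
begin

lemma yseq_cong:
  "(\<forall>j. 1 \<le> j \<and> j \<le> n \<longrightarrow> e j = e' j) \<Longrightarrow> yseq w g a y e n = yseq w g a y e' n"
  by (induction n) auto

lemma yseq_repl:
  assumes "yseq w g a y e k = yseq w g a y e' k" "\<forall>j. j \<noteq> k \<longrightarrow> e j = e' j"
  shows "yseq w g a y e n = yseq w g a y e' n"
proof (induction n)
  case 0 then show ?case by simp
next
  case (Suc n)
  show ?case
  proof (cases "Suc n = k")
    case True then show ?thesis using assms(1) by simp
  next
    case False then show ?thesis using Suc assms(2) by simp
  qed
qed

lemma yseq_meas:
  assumes "Measurable.pred N Y0" "\<forall>j. E j \<in> borel_measurable N"
  shows "Measurable.pred N (\<lambda>x. yseq w g a (Y0 x) (\<lambda>j. E j x) n)"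
proof (induction n)
  case 0 then show ?case using assms by simp
next
  case (Suc n)
  have m: "E (Suc n) \<in> borel_measurable N" using assms by auto
  show ?case using Suc m by simp measurable
qed

lemma bl1: "{x::real. x < c} \<in> sets borel" by measurable
lemma bl2: "{x::real. c \<le> x \<and> x < c'} \<in> sets borel" by measurable
lemma bl3: "(UNIV::real set) \<in> sets borel" by measurable
lemma bl4: "{x::real. c \<le> x} \<in> sets borel" by measurable

lemma alg1:
  fixes a1 a2 q1 q2 :: real
  assumes D: "0 < a1 * q1 + a2 * q2" and a2: "0 < a2"
  shows "(a1 * q1 + a1 * q2) / (a1 * q1 + a2 * q2)
    = a1 * q1 / (a1 * q1 + a2 * q2) + a1 / a2 * (1 - a1 * q1 / (a1 * q1 + a2 * q2))"
proof -
  let ?D = "a1 * q1 + a2 * q2"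
  have "1 - a1 * q1 / ?D = a2 * q2 / ?D" using D by (simp add: field_simps)
  then have "a1 / a2 * (1 - a1 * q1 / ?D) = a1 * q2 / ?D" using a2 by simp
  then show ?thesis by (simp add: add_divide_distrib)
qed
lemma alg2:
  fixes a1 a2 q1 q0 :: real
  assumes D: "0 < (1 - a1) * q1 + (1 - a2) * q0" and a1: "a1 < 1"
  shows "(a2 - a1) * q1 / ((1 - a1) * q1 + (1 - a2) * q0)
    = (a2 - a1) / (1 - a1) * ((1 - a1) * q1 / ((1 - a1) * q1 + (1 - a2) * q0))"
  using a1 by simp
lemma alg3:
  fixes a1 a2 q1 q0 :: real
  assumes D: "0 < (1 - a1) * q1 + (1 - a2) * q0" and a1: "a1 < 1"
  shows "((1 - a2) * q1 + (1 - a2) * q0) / ((1 - a1) * q1 + (1 - a2) * q0)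
    = (1 - a2) / (1 - a1) * ((1 - a1) * q1 / ((1 - a1) * q1 + (1 - a2) * q0))
      + 1 - (1 - a1) * q1 / ((1 - a1) * q1 + (1 - a2) * q0)"
proof -
  let ?D = "(1 - a1) * q1 + (1 - a2) * q0"
  have h1: "1 - (1 - a1) * q1 / ?D = (1 - a2) * q0 / ?D" using D by (simp add: field_simps)
  have h2: "(1 - a2) / (1 - a1) * ((1 - a1) * q1 / ?D) = (1 - a2) * q1 / ?D" using a1 by simp
  have h3: "((1 - a2) * q1 + (1 - a2) * q0) / ?D = (1 - a2) * q1 / ?D + (1 - a2) * q0 / ?D"
    by (simp add: add_divide_distrib)
  show ?thesis using h1 h2 h3 by linarith
qed

theorem lemma2:
  fixes M :: "'a measure" and eps :: "nat \<Rightarrow> 'a \<Rightarrow> real" and y0 :: "'a \<Rightarrow> bool"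
    and F :: "real \<Rightarrow> real" and w :: "nat \<Rightarrow> real" and \<gamma> \<alpha> :: real
    and T s t \<tau> :: nat
  assumes P: "prob_space M"
    and gneg: "\<gamma> < 0"
    and s1: "1 \<le> s" and st: "s + 2 \<le> t" and tT: "t + 1 \<le> T"
    and tau: "\<tau> \<in> {s, t}"
    and indep: "prob_space.indep_vars M (\<lambda>_. borel)
        (\<lambda>i \<omega>. if i = 0 then (if y0 \<omega> then 1 else 0) else eps i \<omega>) {0..T}"
    and abscont: "\<forall>i\<in>{1..T}. \<exists>g. distributed M lborel (eps i) g"
    and cdf: "\<forall>i\<in>{1..T}. \<forall>c. measure M {\<omega> \<in> space M. eps i \<omega> \<le> c} = F c"
    and supp: "strict_mono F"
    and C1pos: "measure M {\<omega> \<in> space M. Cev w \<gamma> \<alpha> y0 eps s t True \<omega>} > 0"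
    and C0pos: "measure M {\<omega> \<in> space M. Cev w \<gamma> \<alpha> y0 eps s t False \<omega>} > 0"
  shows "\<P>(\<omega> in M. eps (\<tau>+1) \<omega> < w (\<tau>+1) + \<gamma> + \<alpha> \<bar> Cev w \<gamma> \<alpha> y0 eps s t True \<omega>)
           = \<P>(\<omega> in M. ypath w \<gamma> \<alpha> y0 eps \<omega> \<tau> \<bar> Cev w \<gamma> \<alpha> y0 eps s t True \<omega>)
             + F (w (\<tau>+1) + \<gamma> + \<alpha>) / F (w (\<tau>+1) + \<alpha>)
               * (1 - \<P>(\<omega> in M. ypath w \<gamma> \<alpha> y0 eps \<omega> \<tau> \<bar> Cev w \<gamma> \<alpha> y0 eps s t True \<omega>))
       \<and> \<P>(\<omega> in M. w (\<tau>+1) + \<gamma> + \<alpha> \<le> eps (\<tau>+1) \<omega> \<and> eps (\<tau>+1) \<omega> < w (\<tau>+1) + \<alpha>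
              \<bar> Cev w \<gamma> \<alpha> y0 eps s t False \<omega>)
           = (F (w (\<tau>+1) + \<alpha>) - F (w (\<tau>+1) + \<gamma> + \<alpha>)) / (1 - F (w (\<tau>+1) + \<gamma> + \<alpha>))
             * \<P>(\<omega> in M. ypath w \<gamma> \<alpha> y0 eps \<omega> \<tau> \<bar> Cev w \<gamma> \<alpha> y0 eps s t False \<omega>)
       \<and> \<P>(\<omega> in M. eps (\<tau>+1) \<omega> \<ge> w (\<tau>+1) + \<alpha> \<bar> Cev w \<gamma> \<alpha> y0 eps s t False \<omega>)
           = (1 - F (w (\<tau>+1) + \<alpha>)) / (1 - F (w (\<tau>+1) + \<gamma> + \<alpha>))
             * \<P>(\<omega> in M. ypath w \<gamma> \<alpha> y0 eps \<omega> \<tau> \<bar> Cev w \<gamma> \<alpha> y0 eps s t False \<omega>)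
             + 1 - \<P>(\<omega> in M. ypath w \<gamma> \<alpha> y0 eps \<omega> \<tau> \<bar> Cev w \<gamma> \<alpha> y0 eps s t False \<omega>)"
  proof -
  interpret prob_space M by (rule P)
  define Y where "Y = (\<lambda>i \<omega>. if i = (0::nat) then (if y0 \<omega> then 1::real else 0) else eps i \<omega>)"
  have indY: "indep_vars (\<lambda>_. borel) Y {0..T}" using indep unfolding Y_def .
  have Ymeas: "\<And>i. i \<in> {0..T} \<Longrightarrow> Y i \<in> borel_measurable M"
    using indY unfolding indep_vars_def2 by auto
  define k where "k = \<tau> + 1"
  have k1: "1 \<le> k" and kT: "k \<le> T" and ktau: "k = Suc \<tau>" and ksk: "k = s + 1 \<or> k = t + 1"
    using tau st tT by (auto simp: k_def)
  have epsk: "eps k \<in> borel_measurable M"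
  proof -
    have "Y k \<in> borel_measurable M" using Ymeas kT by auto
    moreover have "Y k = eps k" using k1 by (auto simp: Y_def)
    ultimately show ?thesis by simp
  qed
  define c where "c = (\<lambda>d. if d then w k + \<gamma> + \<alpha> - 1 else w k + \<alpha> + 1)"
  define ep where "ep = (\<lambda>d j \<omega>. if j = k then c d else eps j \<omega>)"
  define L where "L = {0..T} - {k}"
  define E where "E = (\<lambda>d j (z::nat\<Rightarrow>real). if j = k then c d else if j \<in> L then z j else 0)"
  define \<Phi> where "\<Phi> = (\<lambda>b d y0' e. yseq w \<gamma> \<alpha> y0' e \<tau> = b
      \<and> yseq w \<gamma> \<alpha> y0' e (s-1) = yseq w \<gamma> \<alpha> y0' e (t-1)
      \<and> yseq w \<gamma> \<alpha> y0' e (s+1) = d \<and> yseq w \<gamma> \<alpha> y0' e (t+1) = d)"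
  define A where "A = (\<lambda>b d. {\<omega> \<in> space M. \<Phi> b d (y0 \<omega>) (\<lambda>j. ep d j \<omega>)})"
  define Z where "Z = (\<lambda>\<omega>. restrict (\<lambda>i. Y i \<omega>) L)"
  define G where "G = (\<lambda>b d. {z \<in> space (PiM L (\<lambda>_. borel)). \<Phi> b d (z 0 = 1) (\<lambda>j. E d j z)})"
  define H where "H = (\<lambda>b d. {x. (w k + \<gamma> * (if b then 1 else 0) + \<alpha> - x > 0) = d})"
  have ind2: "indep_var (PiM {k} (\<lambda>_. borel)) (\<lambda>\<omega>. restrict (\<lambda>i. Y i \<omega>) {k}) (PiM L (\<lambda>_. borel)) Z"
    unfolding Z_def L_def using kT by (intro indep_var_restrict[OF indY]) auto
  have Zmeas: "Z \<in> measurable M (PiM L (\<lambda>_. borel))"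
    unfolding Z_def by (rule measurable_restrict) (use Ymeas L_def in auto)
  have Gmeas: "G b d \<in> sets (PiM L (\<lambda>_. borel))" for b d
  proof -
    have L0: "0 \<in> L" using k1 by (auto simp: L_def)
    have p0: "Measurable.pred (PiM L (\<lambda>_. borel)) (\<lambda>z. z 0 = (1::real))"
      using L0 by measurable
    have Em: "\<forall>j. (\<lambda>z. E d j z) \<in> borel_measurable (PiM L (\<lambda>_. borel))"
    proof
      fix j
      show "(\<lambda>z. E d j z) \<in> borel_measurable (PiM L (\<lambda>_. borel))"
        unfolding E_def
        by (cases "j = k"; cases "j \<in> L") auto
    qed
    note ym = yseq_meas[OF p0 Em, of w \<gamma> \<alpha>]
    have "Measurable.pred (PiM L (\<lambda>_. borel)) (\<lambda>z. \<Phi> b d (z 0 = 1) (\<lambda>j. E d j z))"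
      unfolding \<Phi>_def using ym by measurable
    then show ?thesis unfolding G_def pred_def .
  qed
  have pathZ: "yseq w \<gamma> \<alpha> (y0 \<omega>) (\<lambda>j. ep d j \<omega>) n = yseq w \<gamma> \<alpha> (Z \<omega> 0 = 1) (\<lambda>j. E d j (Z \<omega>)) n"
    if "n \<le> T" for \<omega> d n
  proof -
    have "y0 \<omega> = (Z \<omega> 0 = 1)" using k1 by (auto simp: Z_def Y_def L_def)
    moreover have "\<forall>j. 1 \<le> j \<and> j \<le> n \<longrightarrow> ep d j \<omega> = E d j (Z \<omega>)"
      using that by (auto simp: ep_def E_def Z_def Y_def L_def)
    then have "yseq w \<gamma> \<alpha> (y0 \<omega>) (\<lambda>j. ep d j \<omega>) n = yseq w \<gamma> \<alpha> (y0 \<omega>) (\<lambda>j. E d j (Z \<omega>)) n"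
      by (rule yseq_cong)
    ultimately show ?thesis by simp
  qed
  have AZ: "A b d = Z -` G b d \<inter> space M" for b d
  proof -
    have "\<Phi> b d (y0 \<omega>) (\<lambda>j. ep d j \<omega>) = \<Phi> b d (Z \<omega> 0 = 1) (\<lambda>j. E d j (Z \<omega>))" for \<omega>
      unfolding \<Phi>_def using pathZ[of \<tau>] pathZ[of "s-1"] pathZ[of "t-1"] pathZ[of "s+1"] pathZ[of "t+1"]
        tau st tT by auto
    moreover have "\<omega> \<in> space M \<Longrightarrow> Z \<omega> \<in> space (PiM L (\<lambda>_. borel))" for \<omega>
      using measurable_space[OF Zmeas] by blast
    ultimately show ?thesis unfolding A_def G_def by auto
  qed
  have Asets: "A b d \<in> sets M" for b d
    unfolding AZ using Zmeas Gmeas by (rule measurable_sets)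
  have indepS: "prob {\<omega> \<in> space M. eps k \<omega> \<in> S \<and> \<omega> \<in> A b d}
      = prob {\<omega> \<in> space M. eps k \<omega> \<in> S} * prob (A b d)" if S: "S \<in> sets borel" for S b d
  proof -
    define Xa where "Xa = {f \<in> space (PiM {k} (\<lambda>_. borel)). f k \<in> S}"
    have Xas: "Xa \<in> sets (PiM {k} (\<lambda>_. borel))"
    proof -
      have "(\<lambda>f. f k) \<in> borel_measurable (PiM {k} (\<lambda>_. borel))" by measurable
      from measurable_sets[OF this S] show ?thesis
        unfolding Xa_def by (simp add: vimage_def Int_def conj_commute)
    qed
    have e1: "(\<lambda>\<omega>. restrict (\<lambda>i. Y i \<omega>) {k}) -` Xa \<inter> space M = {\<omega> \<in> space M. eps k \<omega> \<in> S}"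
      using k1 by (auto simp: Xa_def Y_def space_PiM)
    have e2: "(\<lambda>x. (restrict (\<lambda>i. Y i x) {k}, Z x)) -` (Xa \<times> G b d) \<inter> space M
        = {\<omega> \<in> space M. eps k \<omega> \<in> S \<and> \<omega> \<in> A b d}"
      using e1 AZ by blast
    show ?thesis using indep_varD[OF ind2 Xas Gmeas[of b d]] e1 e2 AZ by simp
  qed
  have EvId: "{\<omega> \<in> space M. ypath w \<gamma> \<alpha> y0 eps \<omega> \<tau> = b \<and> Cev w \<gamma> \<alpha> y0 eps s t d \<omega> \<and> eps k \<omega> \<in> S}
     = {\<omega> \<in> space M. eps k \<omega> \<in> S \<inter> H b d \<and> \<omega> \<in> A b d}" for b d S
  proof -
    have "(ypath w \<gamma> \<alpha> y0 eps \<omega> \<tau> = b \<and> Cev w \<gamma> \<alpha> y0 eps s t d \<omega> \<and> eps k \<omega> \<in> S)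
       = (eps k \<omega> \<in> S \<inter> H b d \<and> \<Phi> b d (y0 \<omega>) (\<lambda>j. ep d j \<omega>))" for \<omega>
    proof -
      define e where "e = (\<lambda>j. eps j \<omega>)"
      define e' where "e' = (\<lambda>j. ep d j \<omega>)"
      have yk: "yseq w \<gamma> \<alpha> (y0 \<omega>) e k
          = (w k + \<gamma> * (if yseq w \<gamma> \<alpha> (y0 \<omega>) e \<tau> then 1 else 0) + \<alpha> - eps k \<omega> > 0)"
        unfolding ktau e_def by simp
      have yk': "yseq w \<gamma> \<alpha> (y0 \<omega>) e' k = d"
        unfolding ktau e'_def using gneg by (simp add: ep_def c_def ktau)
      have ytau: "yseq w \<gamma> \<alpha> (y0 \<omega>) e' \<tau> = yseq w \<gamma> \<alpha> (y0 \<omega>) e \<tau>"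
        by (rule yseq_cong) (auto simp: e_def e'_def ep_def ktau)
      have rep: "yseq w \<gamma> \<alpha> (y0 \<omega>) e n = yseq w \<gamma> \<alpha> (y0 \<omega>) e' n"
        if "yseq w \<gamma> \<alpha> (y0 \<omega>) e k = d" for n
        by (rule yseq_repl[of _ _ _ _ _ k]) (use that yk' in \<open>auto simp: e_def e'_def ep_def\<close>)
      have Cv: "Cev w \<gamma> \<alpha> y0 eps s t d \<omega> = (yseq w \<gamma> \<alpha> (y0 \<omega>) e (s-1) = yseq w \<gamma> \<alpha> (y0 \<omega>) e (t-1)
          \<and> yseq w \<gamma> \<alpha> (y0 \<omega>) e (s+1) = d \<and> yseq w \<gamma> \<alpha> (y0 \<omega>) e (t+1) = d)"
        unfolding Cev_def ypath_def e_def ..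
      have yp: "ypath w \<gamma> \<alpha> y0 eps \<omega> \<tau> = yseq w \<gamma> \<alpha> (y0 \<omega>) e \<tau>"
        unfolding ypath_def e_def ..
      have Ph: "\<Phi> b d (y0 \<omega>) (\<lambda>j. ep d j \<omega>) = (yseq w \<gamma> \<alpha> (y0 \<omega>) e' \<tau> = b
          \<and> yseq w \<gamma> \<alpha> (y0 \<omega>) e' (s-1) = yseq w \<gamma> \<alpha> (y0 \<omega>) e' (t-1)
          \<and> yseq w \<gamma> \<alpha> (y0 \<omega>) e' (s+1) = d \<and> yseq w \<gamma> \<alpha> (y0 \<omega>) e' (t+1) = d)"
        unfolding \<Phi>_def e'_def ..
      show ?thesis
      proof
        assume L: "ypath w \<gamma> \<alpha> y0 eps \<omega> \<tau> = b \<and> Cev w \<gamma> \<alpha> y0 eps s t d \<omega> \<and> eps k \<omega> \<in> S"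
        then have ykd: "yseq w \<gamma> \<alpha> (y0 \<omega>) e k = d" using Cv ksk by auto
        have r1: "yseq w \<gamma> \<alpha> (y0 \<omega>) e \<tau> = yseq w \<gamma> \<alpha> (y0 \<omega>) e' \<tau>"
          and r2: "yseq w \<gamma> \<alpha> (y0 \<omega>) e (s-1) = yseq w \<gamma> \<alpha> (y0 \<omega>) e' (s-1)"
          and r3: "yseq w \<gamma> \<alpha> (y0 \<omega>) e (t-1) = yseq w \<gamma> \<alpha> (y0 \<omega>) e' (t-1)"
          and r4: "yseq w \<gamma> \<alpha> (y0 \<omega>) e (s+1) = yseq w \<gamma> \<alpha> (y0 \<omega>) e' (s+1)"
          and r5: "yseq w \<gamma> \<alpha> (y0 \<omega>) e (t+1) = yseq w \<gamma> \<alpha> (y0 \<omega>) e' (t+1)"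
          using rep[OF ykd] by blast+
        have b1: "yseq w \<gamma> \<alpha> (y0 \<omega>) e \<tau> = b" using L yp by simp
        have hh: "eps k \<omega> \<in> H b d" unfolding H_def using yk ykd b1 by simp
        have "\<Phi> b d (y0 \<omega>) (\<lambda>j. ep d j \<omega>)" unfolding Ph
          using L Cv b1 r1 r2 r3 r4 r5 by simp
        then show "eps k \<omega> \<in> S \<inter> H b d \<and> \<Phi> b d (y0 \<omega>) (\<lambda>j. ep d j \<omega>)"
          using hh L by simp
      next
        assume R: "eps k \<omega> \<in> S \<inter> H b d \<and> \<Phi> b d (y0 \<omega>) (\<lambda>j. ep d j \<omega>)"
        have b1: "yseq w \<gamma> \<alpha> (y0 \<omega>) e \<tau> = b" using R ytau Ph by simp
        have ykd: "yseq w \<gamma> \<alpha> (y0 \<omega>) e k = d"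
          using R b1 yk unfolding H_def by simp
        have r1: "yseq w \<gamma> \<alpha> (y0 \<omega>) e \<tau> = yseq w \<gamma> \<alpha> (y0 \<omega>) e' \<tau>"
          and r2: "yseq w \<gamma> \<alpha> (y0 \<omega>) e (s-1) = yseq w \<gamma> \<alpha> (y0 \<omega>) e' (s-1)"
          and r3: "yseq w \<gamma> \<alpha> (y0 \<omega>) e (t-1) = yseq w \<gamma> \<alpha> (y0 \<omega>) e' (t-1)"
          and r4: "yseq w \<gamma> \<alpha> (y0 \<omega>) e (s+1) = yseq w \<gamma> \<alpha> (y0 \<omega>) e' (s+1)"
          and r5: "yseq w \<gamma> \<alpha> (y0 \<omega>) e (t+1) = yseq w \<gamma> \<alpha> (y0 \<omega>) e' (t+1)"
          using rep[OF ykd] by blast+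
        have "\<Phi> b d (y0 \<omega>) (\<lambda>j. ep d j \<omega>)" using R by simp
        then have "Cev w \<gamma> \<alpha> y0 eps s t d \<omega>" unfolding Cv Ph
          using r2 r3 r4 r5 by simp
        then show "ypath w \<gamma> \<alpha> y0 eps \<omega> \<tau> = b \<and> Cev w \<gamma> \<alpha> y0 eps s t d \<omega> \<and> eps k \<omega> \<in> S"
          using R yp b1 by simp
      qed
    qed
    then show ?thesis unfolding A_def by auto
  qed
  have Asets': "{\<omega> \<in> space M. eps k \<omega> \<in> S' \<and> \<omega> \<in> A b d} \<in> sets M" if "S' \<in> sets borel" for S' b d
  proof -
    have "{\<omega> \<in> space M. eps k \<omega> \<in> S'} \<in> sets M" using measurable_sets[OF epsk that]
      by (simp add: vimage_def Int_def conj_commute)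
    then have "{\<omega> \<in> space M. eps k \<omega> \<in> S'} \<inter> A b d \<in> sets M" using Asets by blast
    moreover have "{\<omega> \<in> space M. eps k \<omega> \<in> S' \<and> \<omega> \<in> A b d} = {\<omega> \<in> space M. eps k \<omega> \<in> S'} \<inter> A b d"
      by blast
    ultimately show ?thesis by simp
  qed
  have KEY: "prob {\<omega> \<in> space M. ypath w \<gamma> \<alpha> y0 eps \<omega> \<tau> = b \<and> Cev w \<gamma> \<alpha> y0 eps s t d \<omega> \<and> eps k \<omega> \<in> S}
      = prob {\<omega> \<in> space M. eps k \<omega> \<in> S \<inter> H b d} * prob (A b d)"
    if "S \<in> sets borel" "H b d \<in> sets borel" for b d S
    unfolding EvId using indepS[of "S \<inter> H b d" b d] that by auto
  have SPL: "prob {\<omega> \<in> space M. Cev w \<gamma> \<alpha> y0 eps s t d \<omega> \<and> eps k \<omega> \<in> S}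
      = prob {\<omega> \<in> space M. ypath w \<gamma> \<alpha> y0 eps \<omega> \<tau> = True \<and> Cev w \<gamma> \<alpha> y0 eps s t d \<omega> \<and> eps k \<omega> \<in> S}
      + prob {\<omega> \<in> space M. ypath w \<gamma> \<alpha> y0 eps \<omega> \<tau> = False \<and> Cev w \<gamma> \<alpha> y0 eps s t d \<omega> \<and> eps k \<omega> \<in> S}"
    if "S \<in> sets borel" "H True d \<in> sets borel" "H False d \<in> sets borel" for d S
  proof -
    have m1: "{\<omega> \<in> space M. ypath w \<gamma> \<alpha> y0 eps \<omega> \<tau> = b \<and> Cev w \<gamma> \<alpha> y0 eps s t d \<omega> \<and> eps k \<omega> \<in> S} \<in> sets M"
      if "H b d \<in> sets borel" for b
      unfolding EvId using Asets'[of "S \<inter> H b d" b d] that \<open>S \<in> sets borel\<close> by auto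
    have "{\<omega> \<in> space M. Cev w \<gamma> \<alpha> y0 eps s t d \<omega> \<and> eps k \<omega> \<in> S}
       = {\<omega> \<in> space M. ypath w \<gamma> \<alpha> y0 eps \<omega> \<tau> = True \<and> Cev w \<gamma> \<alpha> y0 eps s t d \<omega> \<and> eps k \<omega> \<in> S}
       \<union> {\<omega> \<in> space M. ypath w \<gamma> \<alpha> y0 eps \<omega> \<tau> = False \<and> Cev w \<gamma> \<alpha> y0 eps s t d \<omega> \<and> eps k \<omega> \<in> S}"
      by auto
    then show ?thesis using finite_measure_Union[OF m1[of True] m1[of False]] that by auto
  qed
  have kin: "k \<in> {1..T}" using k1 kT by simp
  obtain g where dist: "distributed M lborel (eps k) g" using abscont kin by blast
  have PXle: "prob {\<omega> \<in> space M. eps k \<omega> \<le> x} = F x" for x using cdf kin by blast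
  have PXeq: "prob {\<omega> \<in> space M. eps k \<omega> = x} = 0" for x
  proof -
    have "emeasure M (eps k -` {x} \<inter> space M) = (\<integral>\<^sup>+y. g y * indicator {x} y \<partial>lborel)"
      by (rule distributed_emeasure[OF dist]) auto
    also have "\<dots> = 0" by (rule nn_integral_null_set) auto
    finally have "emeasure M {\<omega> \<in> space M. eps k \<omega> = x} = 0"
      by (simp add: vimage_def Int_def conj_commute)
    then show ?thesis by (simp add: measure_def)
  qed
  have setsX: "{\<omega> \<in> space M. P (eps k \<omega>)} \<in> sets M" if "{x. P x} \<in> sets borel" for P
    using measurable_sets[OF epsk that] by (simp add: vimage_def Int_def conj_commute)
  have PXlt: "prob {\<omega> \<in> space M. eps k \<omega> < x} = F x" for x
  proof -
    have "{\<omega> \<in> space M. eps k \<omega> < x} = {\<omega> \<in> space M. eps k \<omega> \<le> x} - {\<omega> \<in> space M. eps k \<omega> = x}"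
      by auto
    then show ?thesis using finite_measure_Diff[OF setsX setsX, of "\<lambda>y. y \<le> x" "\<lambda>y. y = x"] PXle PXeq
      by auto
  qed
  have PXge: "prob {\<omega> \<in> space M. x \<le> eps k \<omega>} = 1 - F x" for x
  proof -
    have "{\<omega> \<in> space M. x \<le> eps k \<omega>} = space M - {\<omega> \<in> space M. eps k \<omega> < x}" by auto
    then show ?thesis using prob_compl[OF setsX, of "\<lambda>y. y < x"] PXlt by auto
  qed
  have PXint: "prob {\<omega> \<in> space M. x \<le> eps k \<omega> \<and> eps k \<omega> < x'} = F x' - F x" if "x \<le> x'" for x x'
  proof -
    have "{\<omega> \<in> space M. x \<le> eps k \<omega> \<and> eps k \<omega> < x'} = {\<omega> \<in> space M. eps k \<omega> < x'} - {\<omega> \<in> space M. eps k \<omega> < x}"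
      by auto
    moreover have "{\<omega> \<in> space M. eps k \<omega> < x} \<subseteq> {\<omega> \<in> space M. eps k \<omega> < x'}" using that by auto
    ultimately show ?thesis using finite_measure_Diff[OF setsX setsX, of "\<lambda>y. y < x'" "\<lambda>y. y < x"] PXlt
      by auto
  qed
  have Fpos: "0 < F x" for x
  proof -
    have "F (x - 1) < F x" using supp by (rule strict_monoD) simp
    moreover have "0 \<le> F (x - 1)" using PXle[of "x-1"] by (metis measure_nonneg)
    ultimately show ?thesis by simp
  qed
  have Flt1: "F x < 1" for x
  proof -
    have "F x < F (x + 1)" using supp by (rule strict_monoD) simp
    moreover have "F (x + 1) \<le> 1" using PXle[of "x+1"] by (metis prob_le_1)
    ultimately show ?thesis by simp
  qed
  define c1 where "c1 = w k + \<gamma> + \<alpha>"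
  define c2 where "c2 = w k + \<alpha>"
  have c12: "c1 < c2" using gneg by (simp add: c1_def c2_def)
  have F12: "F c1 < F c2" using supp c12 by (rule strict_monoD)
  have HTT: "H True True = {x. x < c1}" and HFT: "H False True = {x. x < c2}"
    and HTF: "H True False = {x. c1 \<le> x}" and HFF: "H False False = {x. c2 \<le> x}"
    by (auto simp: H_def c1_def c2_def)
  have Hs: "H b d \<in> sets borel" for b d by (cases b; cases d) (auto simp: HTT HFT HTF HFF)
  define p where "p = (\<lambda>b d. prob (A b d))"
  have pnn: "0 \<le> p b d" for b d by (simp add: p_def)
  have XS: "prob {\<omega> \<in> space M. eps k \<omega> \<in> S} = prob {\<omega> \<in> space M. P (eps k \<omega>)}"
    if "\<And>x. x \<in> S \<longleftrightarrow> P x" for S P using that by simp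
  note bl = bl1 bl2 bl3 bl4
  have N1: "prob {\<omega> \<in> space M. eps k \<omega> < c1 \<and> Cev w \<gamma> \<alpha> y0 eps s t True \<omega>}
      = F c1 * p True True + F c1 * p False True"
  proof -
    have e1: "prob {\<omega> \<in> space M. eps k \<omega> < c1 \<and> Cev w \<gamma> \<alpha> y0 eps s t True \<omega>}
       = prob {\<omega> \<in> space M. Cev w \<gamma> \<alpha> y0 eps s t True \<omega> \<and> eps k \<omega> \<in> {x. x < c1}}"
      by (rule arg_cong[where f=prob]) auto
    have e2: "prob {\<omega> \<in> space M. Cev w \<gamma> \<alpha> y0 eps s t True \<omega> \<and> eps k \<omega> \<in> {x. x < c1}} = prob {\<omega> \<in> space M. eps k \<omega> \<in> {x. x < c1} \<inter> H True True} * p True True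
        + prob {\<omega> \<in> space M. eps k \<omega> \<in> {x. x < c1} \<inter> H False True} * p False True"
      unfolding SPL[OF bl(1) Hs Hs] KEY[OF bl(1) Hs] p_def by (rule refl)
    have a1: "prob {\<omega> \<in> space M. eps k \<omega> \<in> {x. x < c1} \<inter> H True True} = F c1"
    proof -
      have "{\<omega> \<in> space M. eps k \<omega> \<in> {x. x < c1} \<inter> H True True} = {\<omega> \<in> space M. eps k \<omega> < c1}"
        using HTT c12 by (intro Collect_cong) force
      then show ?thesis using PXlt by simp
    qed
    have a2: "prob {\<omega> \<in> space M. eps k \<omega> \<in> {x. x < c1} \<inter> H False True} = F c1"
    proof -
      have "{\<omega> \<in> space M. eps k \<omega> \<in> {x. x < c1} \<inter> H False True} = {\<omega> \<in> space M. eps k \<omega> < c1}"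
        using HFT c12 by (intro Collect_cong) force
      then show ?thesis using PXlt by simp
    qed
    show ?thesis using trans[OF e1 e2] unfolding a1 a2 by (simp add: mult.commute)
  qed
  have D1: "prob {\<omega> \<in> space M. Cev w \<gamma> \<alpha> y0 eps s t True \<omega>}
      = F c1 * p True True + F c2 * p False True"
  proof -
    have e1: "prob {\<omega> \<in> space M. Cev w \<gamma> \<alpha> y0 eps s t True \<omega>}
       = prob {\<omega> \<in> space M. Cev w \<gamma> \<alpha> y0 eps s t True \<omega> \<and> eps k \<omega> \<in> UNIV}"
      by simp
    have e2: "prob {\<omega> \<in> space M. Cev w \<gamma> \<alpha> y0 eps s t True \<omega> \<and> eps k \<omega> \<in> UNIV} = prob {\<omega> \<in> space M. eps k \<omega> \<in> UNIV \<inter> H True True} * p True True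
        + prob {\<omega> \<in> space M. eps k \<omega> \<in> UNIV \<inter> H False True} * p False True"
      unfolding SPL[OF bl(3) Hs Hs] KEY[OF bl(3) Hs] p_def by (rule refl)
    have a1: "prob {\<omega> \<in> space M. eps k \<omega> \<in> UNIV \<inter> H True True} = F c1"
    proof -
      have "{\<omega> \<in> space M. eps k \<omega> \<in> UNIV \<inter> H True True} = {\<omega> \<in> space M. eps k \<omega> < c1}"
        using HTT c12 by (intro Collect_cong) force
      then show ?thesis using PXlt by simp
    qed
    have a2: "prob {\<omega> \<in> space M. eps k \<omega> \<in> UNIV \<inter> H False True} = F c2"
    proof -
      have "{\<omega> \<in> space M. eps k \<omega> \<in> UNIV \<inter> H False True} = {\<omega> \<in> space M. eps k \<omega> < c2}"
        using HFT c12 by (intro Collect_cong) force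
      then show ?thesis using PXlt by simp
    qed
    show ?thesis using trans[OF e1 e2] unfolding a1 a2 by (simp add: mult.commute)
  qed
  have Y1: "prob {\<omega> \<in> space M. ypath w \<gamma> \<alpha> y0 eps \<omega> \<tau> \<and> Cev w \<gamma> \<alpha> y0 eps s t True \<omega>}
      = F c1 * p True True"
  proof -
    have e1: "prob {\<omega> \<in> space M. ypath w \<gamma> \<alpha> y0 eps \<omega> \<tau> \<and> Cev w \<gamma> \<alpha> y0 eps s t True \<omega>}
       = prob {\<omega> \<in> space M. ypath w \<gamma> \<alpha> y0 eps \<omega> \<tau> = True \<and> Cev w \<gamma> \<alpha> y0 eps s t True \<omega> \<and> eps k \<omega> \<in> UNIV}"
      by simp
    have e2: "prob {\<omega> \<in> space M. ypath w \<gamma> \<alpha> y0 eps \<omega> \<tau> = True \<and> Cev w \<gamma> \<alpha> y0 eps s t True \<omega> \<and> eps k \<omega> \<in> UNIV} = prob {\<omega> \<in> space M. eps k \<omega> \<in> UNIV \<inter> H True True} * p True True"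
      unfolding KEY[OF bl(3) Hs] p_def by (rule refl)
    have a1: "prob {\<omega> \<in> space M. eps k \<omega> \<in> UNIV \<inter> H True True} = F c1"
    proof -
      have "{\<omega> \<in> space M. eps k \<omega> \<in> UNIV \<inter> H True True} = {\<omega> \<in> space M. eps k \<omega> < c1}"
        using HTT c12 by (intro Collect_cong) force
      then show ?thesis using PXlt by simp
    qed
    show ?thesis using trans[OF e1 e2] unfolding a1 by (simp add: mult.commute)
  qed
  have N2: "prob {\<omega> \<in> space M. c1 \<le> eps k \<omega> \<and> eps k \<omega> < c2 \<and> Cev w \<gamma> \<alpha> y0 eps s t False \<omega>}
      = (F c2 - F c1) * p True False"
  proof -
    have e1: "prob {\<omega> \<in> space M. c1 \<le> eps k \<omega> \<and> eps k \<omega> < c2 \<and> Cev w \<gamma> \<alpha> y0 eps s t False \<omega>}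
       = prob {\<omega> \<in> space M. Cev w \<gamma> \<alpha> y0 eps s t False \<omega> \<and> eps k \<omega> \<in> {x. c1 \<le> x \<and> x < c2}}"
      by (rule arg_cong[where f=prob]) auto
    have e2: "prob {\<omega> \<in> space M. Cev w \<gamma> \<alpha> y0 eps s t False \<omega> \<and> eps k \<omega> \<in> {x. c1 \<le> x \<and> x < c2}} = prob {\<omega> \<in> space M. eps k \<omega> \<in> {x. c1 \<le> x \<and> x < c2} \<inter> H True False} * p True False
        + prob {\<omega> \<in> space M. eps k \<omega> \<in> {x. c1 \<le> x \<and> x < c2} \<inter> H False False} * p False False"
      unfolding SPL[OF bl(2) Hs Hs] KEY[OF bl(2) Hs] p_def by (rule refl)
    have a1: "prob {\<omega> \<in> space M. eps k \<omega> \<in> {x. c1 \<le> x \<and> x < c2} \<inter> H True False} = F c2 - F c1"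
    proof -
      have "{\<omega> \<in> space M. eps k \<omega> \<in> {x. c1 \<le> x \<and> x < c2} \<inter> H True False} = {\<omega> \<in> space M. c1 \<le> eps k \<omega> \<and> eps k \<omega> < c2}"
        using HTF c12 by (intro Collect_cong) force
      then show ?thesis using PXint[OF less_imp_le[OF c12]] by simp
    qed
    have a2: "prob {\<omega> \<in> space M. eps k \<omega> \<in> {x. c1 \<le> x \<and> x < c2} \<inter> H False False} = 0"
    proof -
      have E0: "{\<omega> \<in> space M. eps k \<omega> \<in> {x. c1 \<le> x \<and> x < c2} \<inter> H False False} = {}"
        using HFF c12 by force
      show ?thesis unfolding E0 by simp
    qed
    show ?thesis using trans[OF e1 e2] unfolding a1 a2 by (simp add: mult.commute)
  qed
  have N3: "prob {\<omega> \<in> space M. c2 \<le> eps k \<omega> \<and> Cev w \<gamma> \<alpha> y0 eps s t False \<omega>}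
      = (1 - F c2) * p True False + (1 - F c2) * p False False"
  proof -
    have e1: "prob {\<omega> \<in> space M. c2 \<le> eps k \<omega> \<and> Cev w \<gamma> \<alpha> y0 eps s t False \<omega>}
       = prob {\<omega> \<in> space M. Cev w \<gamma> \<alpha> y0 eps s t False \<omega> \<and> eps k \<omega> \<in> {x. c2 \<le> x}}"
      by (rule arg_cong[where f=prob]) auto
    have e2: "prob {\<omega> \<in> space M. Cev w \<gamma> \<alpha> y0 eps s t False \<omega> \<and> eps k \<omega> \<in> {x. c2 \<le> x}} = prob {\<omega> \<in> space M. eps k \<omega> \<in> {x. c2 \<le> x} \<inter> H True False} * p True False
        + prob {\<omega> \<in> space M. eps k \<omega> \<in> {x. c2 \<le> x} \<inter> H False False} * p False False"
      unfolding SPL[OF bl(4) Hs Hs] KEY[OF bl(4) Hs] p_def by (rule refl)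
    have a1: "prob {\<omega> \<in> space M. eps k \<omega> \<in> {x. c2 \<le> x} \<inter> H True False} = 1 - F c2"
    proof -
      have "{\<omega> \<in> space M. eps k \<omega> \<in> {x. c2 \<le> x} \<inter> H True False} = {\<omega> \<in> space M. c2 \<le> eps k \<omega>}"
        using HTF c12 by (intro Collect_cong) force
      then show ?thesis using PXge by simp
    qed
    have a2: "prob {\<omega> \<in> space M. eps k \<omega> \<in> {x. c2 \<le> x} \<inter> H False False} = 1 - F c2"
    proof -
      have "{\<omega> \<in> space M. eps k \<omega> \<in> {x. c2 \<le> x} \<inter> H False False} = {\<omega> \<in> space M. c2 \<le> eps k \<omega>}"
        using HFF c12 by (intro Collect_cong) force
      then show ?thesis using PXge by simp
    qed
    show ?thesis using trans[OF e1 e2] unfolding a1 a2 by (simp add: mult.commute)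
  qed
  have D0: "prob {\<omega> \<in> space M. Cev w \<gamma> \<alpha> y0 eps s t False \<omega>}
      = (1 - F c1) * p True False + (1 - F c2) * p False False"
  proof -
    have e1: "prob {\<omega> \<in> space M. Cev w \<gamma> \<alpha> y0 eps s t False \<omega>}
       = prob {\<omega> \<in> space M. Cev w \<gamma> \<alpha> y0 eps s t False \<omega> \<and> eps k \<omega> \<in> UNIV}"
      by simp
    have e2: "prob {\<omega> \<in> space M. Cev w \<gamma> \<alpha> y0 eps s t False \<omega> \<and> eps k \<omega> \<in> UNIV} = prob {\<omega> \<in> space M. eps k \<omega> \<in> UNIV \<inter> H True False} * p True False
        + prob {\<omega> \<in> space M. eps k \<omega> \<in> UNIV \<inter> H False False} * p False False"
      unfolding SPL[OF bl(3) Hs Hs] KEY[OF bl(3) Hs] p_def by (rule refl)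
    have a1: "prob {\<omega> \<in> space M. eps k \<omega> \<in> UNIV \<inter> H True False} = 1 - F c1"
    proof -
      have "{\<omega> \<in> space M. eps k \<omega> \<in> UNIV \<inter> H True False} = {\<omega> \<in> space M. c1 \<le> eps k \<omega>}"
        using HTF c12 by (intro Collect_cong) force
      then show ?thesis using PXge by simp
    qed
    have a2: "prob {\<omega> \<in> space M. eps k \<omega> \<in> UNIV \<inter> H False False} = 1 - F c2"
    proof -
      have "{\<omega> \<in> space M. eps k \<omega> \<in> UNIV \<inter> H False False} = {\<omega> \<in> space M. c2 \<le> eps k \<omega>}"
        using HFF c12 by (intro Collect_cong) force
      then show ?thesis using PXge by simp
    qed
    show ?thesis using trans[OF e1 e2] unfolding a1 a2 by (simp add: mult.commute)
  qed
  have Y0: "prob {\<omega> \<in> space M. ypath w \<gamma> \<alpha> y0 eps \<omega> \<tau> \<and> Cev w \<gamma> \<alpha> y0 eps s t False \<omega>}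
      = (1 - F c1) * p True False"
  proof -
    have e1: "prob {\<omega> \<in> space M. ypath w \<gamma> \<alpha> y0 eps \<omega> \<tau> \<and> Cev w \<gamma> \<alpha> y0 eps s t False \<omega>}
       = prob {\<omega> \<in> space M. ypath w \<gamma> \<alpha> y0 eps \<omega> \<tau> = True \<and> Cev w \<gamma> \<alpha> y0 eps s t False \<omega> \<and> eps k \<omega> \<in> UNIV}"
      by simp
    have e2: "prob {\<omega> \<in> space M. ypath w \<gamma> \<alpha> y0 eps \<omega> \<tau> = True \<and> Cev w \<gamma> \<alpha> y0 eps s t False \<omega> \<and> eps k \<omega> \<in> UNIV} = prob {\<omega> \<in> space M. eps k \<omega> \<in> UNIV \<inter> H True False} * p True False"
      unfolding KEY[OF bl(3) Hs] p_def by (rule refl)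
    have a1: "prob {\<omega> \<in> space M. eps k \<omega> \<in> UNIV \<inter> H True False} = 1 - F c1"
    proof -
      have "{\<omega> \<in> space M. eps k \<omega> \<in> UNIV \<inter> H True False} = {\<omega> \<in> space M. c1 \<le> eps k \<omega>}"
        using HTF c12 by (intro Collect_cong) force
      then show ?thesis using PXge by simp
    qed
    show ?thesis using trans[OF e1 e2] unfolding a1 by (simp add: mult.commute)
  qed
  have D1pos: "0 < F c1 * p True True + F c2 * p False True" using C1pos D1 by simp
  have D0pos: "0 < (1 - F c1) * p True False + (1 - F c2) * p False False" using C0pos D0 by simp
  have F1p: "0 < F c1" and F2p: "0 < F c2" and F1l: "F c1 < 1" and F2l: "F c2 < 1"
    using Fpos Flt1 by auto
  have R1: "\<P>(\<omega> in M. eps k \<omega> < c1 \<bar> Cev w \<gamma> \<alpha> y0 eps s t True \<omega>)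
      = \<P>(\<omega> in M. ypath w \<gamma> \<alpha> y0 eps \<omega> \<tau> \<bar> Cev w \<gamma> \<alpha> y0 eps s t True \<omega>)
        + F c1 / F c2 * (1 - \<P>(\<omega> in M. ypath w \<gamma> \<alpha> y0 eps \<omega> \<tau> \<bar> Cev w \<gamma> \<alpha> y0 eps s t True \<omega>))"
    unfolding cond_prob_def N1 D1 Y1 by (rule alg1[OF D1pos F2p])
  have R2: "\<P>(\<omega> in M. c1 \<le> eps k \<omega> \<and> eps k \<omega> < c2 \<bar> Cev w \<gamma> \<alpha> y0 eps s t False \<omega>)
      = (F c2 - F c1) / (1 - F c1) * \<P>(\<omega> in M. ypath w \<gamma> \<alpha> y0 eps \<omega> \<tau> \<bar> Cev w \<gamma> \<alpha> y0 eps s t False \<omega>)"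
    unfolding cond_prob_def conj_assoc N2 D0 Y0 by (rule alg2[OF D0pos F1l])
  have R3: "\<P>(\<omega> in M. eps k \<omega> \<ge> c2 \<bar> Cev w \<gamma> \<alpha> y0 eps s t False \<omega>)
      = (1 - F c2) / (1 - F c1) * \<P>(\<omega> in M. ypath w \<gamma> \<alpha> y0 eps \<omega> \<tau> \<bar> Cev w \<gamma> \<alpha> y0 eps s t False \<omega>)
        + 1 - \<P>(\<omega> in M. ypath w \<gamma> \<alpha> y0 eps \<omega> \<tau> \<bar> Cev w \<gamma> \<alpha> y0 eps s t False \<omega>)"
    unfolding cond_prob_def N3 D0 Y0 by (rule alg3[OF D0pos F1l])
  show ?thesis using R1 R2 R3 unfolding c1_def c2_def k_def by simp
qed

end
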